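(* Let $\varphi(x)=a_nx^n+\cdots+a_1x+a_0\in\mathbb{C}[x]$ with $a_n\neq0$ have $n$ distinct roots $x_1,\dots,x_n$. For any rational function $h(x)\in R$, $$\sum_{i=1}^n h(x_i)=\frac{b_{n-1}}{a_n},$$ where $b_{n-1}$ is the coefficient of $x^{n-1}$ in the unique polynomial $r(x)$ of degree less than $n$ lying in the coset $\overline{\varphi'(x)h(x)}\in R/(\varphi(x))$.
   Context: $R\subset\mathbb{C}(x)$ denotes the subring of rational functions $p(x)/q(x)$ with $p,q\in\mathbb{C}[x]$ and $q(x_i)\neq0$ for every root $x_i$ of $\varphi$. $(\varphi(x))$ is the ideal of $R$ generated by $\varphi$, and cosets in $R/(\varphi(x))$ are denoted by an overbar. Every coset of $R/(\varphi(x))$ contains a unique polynomial of degree less than $n$. *)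

theory Defs
  imports "HOL-Computational_Algebra.Polynomial" "HOL-Computational_Algebra.Fraction_Field"
begin

text \<open>Rational functions over C are modelled as elements of the fraction field of complex poly.
  Embedding of polynomials into rational functions.\<close>
definition rf :: "complex poly \<Rightarrow> complex poly fract" where
  "rf p = Fract p 1"

definition ringR :: "complex poly \<Rightarrow> complex poly fract set" where
  "ringR \<phi> = {Fract p q | p q. q \<noteq> 0 \<and> (\<forall>x. poly \<phi> x = 0 \<longrightarrow> poly q x \<noteq> 0)}"

definition same_coset :: "complex poly \<Rightarrow> complex poly fract \<Rightarrow> complex poly fract \<Rightarrow> bool" where
  "same_coset \<phi> f g \<longleftrightarrow> (\<exists>s \<in> ringR \<phi>. f - g = rf \<phi> * s)"

end

theory Submission
  imports Defs
begin

lemma coset_eval: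
  fixes \<phi> p q r :: "complex poly"
  assumes "q \<noteq> 0"
    and "\<forall>x. poly \<phi> x = 0 \<longrightarrow> poly q x \<noteq> 0"
    and "same_coset \<phi> (rf (pderiv \<phi>) * Fract p q) (rf r)"
    and "poly \<phi> x = 0"
  shows "poly r x = poly (pderiv \<phi>) x * (poly p x / poly q x)"
proof -
  obtain s where s: "s \<in> ringR \<phi>" "rf (pderiv \<phi>) * Fract p q - rf r = rf \<phi> * s"
    using assms(3) unfolding same_coset_def by blast
  then obtain u v where uv: "s = Fract u v" "v \<noteq> 0" "\<forall>x. poly \<phi> x = 0 \<longrightarrow> poly v x \<noteq> 0"
    unfolding ringR_def by blast
  have "Fract (pderiv \<phi> * p - r * q) q = Fract (\<phi> * u) v"
    using s(2) assms(1) uv by (simp add: rf_def)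
  hence "(pderiv \<phi> * p - r * q) * v = (\<phi> * u) * q"
    using assms(1) uv(2) by (simp add: eq_fract)
  hence "poly ((pderiv \<phi> * p - r * q) * v) x = poly ((\<phi> * u) * q) x" by simp
  hence "(poly (pderiv \<phi>) x * poly p x - poly r x * poly q x) * poly v x = 0"
    using assms(4) by simp
  hence "poly (pderiv \<phi>) x * poly p x - poly r x * poly q x = 0"
    using uv(3) assms(4) by simp
  thus ?thesis using assms(2,4) by (simp add: field_simps)
qed

theorem corollary2:
  fixes \<phi> p q r :: "complex poly"
  assumes "degree \<phi> \<ge> 1"
    and "card {x. poly \<phi> x = 0} = degree \<phi>"
    and "q \<noteq> 0"
    and "\<forall>x. poly \<phi> x = 0 \<longrightarrow> poly q x \<noteq> 0"
    and "degree r < degree \<phi>"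
    and "same_coset \<phi> (rf (pderiv \<phi>) * Fract p q) (rf r)"
  shows "(\<Sum>x\<in>{x. poly \<phi> x = 0}. poly p x / poly q x)
           = coeff r (degree \<phi> - 1) / lead_coeff \<phi>"
proof -
  define Z where "Z = {x. poly \<phi> x = 0}"
  define n where "n = degree \<phi>"
  have phi0: "\<phi> \<noteq> 0" using assms(1) by auto
  have finZ: "finite Z" unfolding Z_def using phi0 by (rule poly_roots_finite)
  have cardZ: "card Z = n" using assms(2) unfolding Z_def n_def .
  define f where "f x = \<phi> div [:-x,1:]" for x
  have fact: "\<phi> = [:-x,1:] * f x" if "x \<in> Z" for x
  proof -
    have "[:-x,1:] dvd \<phi>" using that unfolding Z_def by (simp add: poly_eq_0_iff_dvd)
    thus ?thesis unfolding f_def by (rule dvd_mult_div_cancel[symmetric])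
  qed
  have f0: "f x \<noteq> 0" if "x \<in> Z" for x using fact[OF that] phi0 by auto
  have degf: "degree (f x) = n - 1" if "x \<in> Z" for x
  proof -
    have "degree \<phi> = degree [:-x,1:] + degree (f x)"
      using fact[OF that] f0[OF that] by (metis degree_mult_eq pCons_eq_0_iff zero_neq_one)
    thus ?thesis unfolding n_def by simp
  qed
  have lcf: "lead_coeff (f x) = lead_coeff \<phi>" if "x \<in> Z" for x
    using fact[OF that] by (metis lead_coeff_mult lead_coeff_pCons(1) mult_1 one_neq_zero pCons_0_0 lead_coeff_1 degree_pCons_0 pCons_one)
  have fvan: "poly (f x) y = 0" if "x \<in> Z" "y \<in> Z" "x \<noteq> y" for x y
  proof -
    have "poly \<phi> y = 0" using that(2) unfolding Z_def by simp
    moreover have "poly \<phi> y = (y - x) * poly (f x) y" by (subst fact[OF that(1)]) (simp add: algebra_simps)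
    ultimately have "(y - x) * poly (f x) y = 0" by simp
    hence "(y - x) * poly (f x) y = 0" by simp
    thus ?thesis using that(3) by simp
  qed
  have fnz: "poly (f x) x \<noteq> 0" if "x \<in> Z" for x
  proof
    assume h: "poly (f x) x = 0"
    have "Z \<subseteq> {y. poly (f x) y = 0}" using h fvan[OF that] by auto
    hence "card Z \<le> card {y. poly (f x) y = 0}"
      using poly_roots_finite[OF f0[OF that]] by (rule card_mono[rotated])
    also have "\<dots> \<le> n - 1" using card_poly_roots_bound[OF f0[OF that]] degf[OF that] by simp
    finally show False using cardZ assms(1) unfolding n_def by simp
  qed
  have dphi: "poly (pderiv \<phi>) x = poly (f x) x" if "x \<in> Z" for x
  proof -
    have d1: "pderiv [:-x,1:] = 1" by (simp add: pderiv_pCons)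
    have "pderiv \<phi> = [:-x,1:] * pderiv (f x) + f x * pderiv [:-x,1:]"
      by (subst fact[OF that]) (rule pderiv_mult)
    hence "poly (pderiv \<phi>) x = poly ([:-x,1:] * pderiv (f x) + f x * pderiv [:-x,1:]) x" by simp
    also have "\<dots> = poly (f x) x" by (simp only: d1 poly_add poly_mult) simp
    finally show ?thesis .
  qed
  define c where "c x = poly p x / poly q x" for x
  have rval: "poly r x = poly (f x) x * c x" if "x \<in> Z" for x
    using coset_eval[OF assms(3,4,6)] that dphi[OF that] unfolding Z_def c_def by simp
  define g where "g = (\<Sum>x\<in>Z. smult (c x) (f x))"
  have degg: "degree g \<le> n - 1" unfolding g_def
    by (rule degree_sum_le) (auto intro: order.trans[OF degree_smult_le] simp: degf finZ)
  have gval: "poly g y = poly r y" if "y \<in> Z" for y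
  proof -
    have "poly g y = (\<Sum>x\<in>Z. c x * poly (f x) y)" unfolding g_def by (simp add: poly_sum)
    also have "\<dots> = c y * poly (f y) y"
      by (rule sum.remove[OF finZ that, THEN trans]) (auto simp: fvan that intro!: sum.neutral)
    finally show ?thesis using rval[OF that] by simp
  qed
  have rg: "r = g"
  proof (rule ccontr)
    assume ne: "r \<noteq> g"
    hence ne': "r - g \<noteq> 0" by simp
    have "Z \<subseteq> {y. poly (r - g) y = 0}" using gval by auto
    hence "card Z \<le> card {y. poly (r - g) y = 0}"
      using poly_roots_finite[OF ne'] by (rule card_mono[rotated])
    also have "\<dots> \<le> degree (r - g)" by (rule card_poly_roots_bound[OF ne'])
    also have "\<dots> \<le> max (degree r) (degree g)" by (rule degree_diff_le_max)
    also have "\<dots> < n" using degg assms(5) assms(1) unfolding n_def by auto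
    finally show False using cardZ by simp
  qed
  have "coeff r (n - 1) = (\<Sum>x\<in>Z. c x * coeff (f x) (n - 1))"
    unfolding rg g_def by (simp add: coeff_sum)
  also have "\<dots> = (\<Sum>x\<in>Z. c x) * lead_coeff \<phi>"
  proof -
    have "coeff (f x) (n - 1) = lead_coeff \<phi>" if "x \<in> Z" for x
      using degf[OF that] lcf[OF that] by simp
    thus ?thesis by (simp add: sum_distrib_right)
  qed
  finally have "coeff r (n - 1) = (\<Sum>x\<in>Z. c x) * lead_coeff \<phi>" .
  thus ?thesis using phi0 unfolding Z_def c_def n_def by (simp add: field_simps)
qed

end
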